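(* Let $k$ be an algebraically closed field of characteristic zero, $n\ge1$, $q\in k$ a primitive $2n$-th root of unity, $a\in k\setminus\{0\}$. Let $\mathfrak wH_{4n}$ be the algebra generated by $Z,X$ with relations $Z^{2n+1}=Z$, $ZX=qXZ$, $X^2=0$. Then $\mathfrak wH_{4n}$ is a noncommutative and noncocommutative weak Hopf algebra with comultiplication, counit and weak antipode $T$ determined by $\Delta(Z)=Z\otimes Z+a(1-q^{-2})Z^{n+1}X\otimes ZX$, $\Delta(X)=X\otimes 1+Z^n\otimes X$, $\epsilon(Z)=1$, $\epsilon(X)=0$, $T(Z)=Z^{2n-1}$, $T(X)=-Z^nX$ (with $\Delta,\epsilon$ algebra maps and $T$ an algebra anti-homomorphism).
   Context: A weak Hopf algebra (in the sense of Li) is a $k$-bialgebra $H$ together with a linear map $T\in\mathrm{Hom}(H,H)$ such that $T*\mathrm{id}*T=T$ and $\mathrm{id}*T*\mathrm{id}=\mathrm{id}$, where $*$ is the convolution product on $\mathrm{Hom}(H,H)$. *)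

theory Defs
  imports "HOL-Computational_Algebra.Polynomial"
begin

text \<open>A vector of the k-vector space with basis B is a coefficient function
  B -> k (extended by 0 outside B).  The tensor product of the spaces with bases
  B and C is the space with basis B x C.\<close>

definition vsp :: "'b set \<Rightarrow> ('b \<Rightarrow> 'k::zero) set" where
  "vsp B = {f. \<forall>x. x \<notin> B \<longrightarrow> f x = 0}"

definition bvec :: "'b \<Rightarrow> 'b \<Rightarrow> 'k::zero_neq_one" where
  "bvec b = (\<lambda>x. if x = b then 1 else 0)"

definition tprod :: "('b \<Rightarrow> 'k::times) \<Rightarrow> ('c \<Rightarrow> 'k) \<Rightarrow> ('b \<times> 'c \<Rightarrow> 'k)" where
  "tprod f g = (\<lambda>(x, y). f x * g y)"

definition linear_on :: "'b set \<Rightarrow> 'c set \<Rightarrow> (('b \<Rightarrow> 'k::comm_ring_1) \<Rightarrow> 'c \<Rightarrow> 'k) \<Rightarrow> bool" where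
  "linear_on B C L \<longleftrightarrow>
     (\<forall>f\<in>vsp B. L f \<in> vsp C) \<and>
     (\<forall>f\<in>vsp B. \<forall>g\<in>vsp B. L (\<lambda>x. f x + g x) = (\<lambda>y. L f y + L g y)) \<and>
     (\<forall>c. \<forall>f\<in>vsp B. L (\<lambda>x. c * f x) = (\<lambda>y. c * L f y))"

definition linear_fun :: "'b set \<Rightarrow> (('b \<Rightarrow> 'k::comm_ring_1) \<Rightarrow> 'k) \<Rightarrow> bool" where
  "linear_fun B e \<longleftrightarrow>
     (\<forall>f\<in>vsp B. \<forall>g\<in>vsp B. e (\<lambda>x. f x + g x) = e f + e g) \<and>
     (\<forall>c. \<forall>f\<in>vsp B. e (\<lambda>x. c * f x) = c * e f)"

definition tmap :: "'b set \<Rightarrow> 'b2 set \<Rightarrow> (('b \<Rightarrow> 'k::comm_ring_1) \<Rightarrow> 'c \<Rightarrow> 'k)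
    \<Rightarrow> (('b2 \<Rightarrow> 'k) \<Rightarrow> 'c2 \<Rightarrow> 'k) \<Rightarrow> ('b \<times> 'b2 \<Rightarrow> 'k) \<Rightarrow> ('c \<times> 'c2 \<Rightarrow> 'k)" where
  "tmap B B2 L M F = (\<lambda>(c, c2). \<Sum>(b, b2)\<in>B \<times> B2. F (b, b2) * L (bvec b) c * M (bvec b2) c2)"

definition mtens :: "'b set \<Rightarrow> (('b \<Rightarrow> 'k::comm_ring_1) \<Rightarrow> ('b \<Rightarrow> 'k) \<Rightarrow> 'b \<Rightarrow> 'k)
    \<Rightarrow> ('b \<times> 'b \<Rightarrow> 'k) \<Rightarrow> 'b \<Rightarrow> 'k" where
  "mtens B m F = (\<lambda>c. \<Sum>(b1, b2)\<in>B \<times> B. F (b1, b2) * m (bvec b1) (bvec b2) c)"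

definition tens_mult :: "'b set \<Rightarrow> (('b \<Rightarrow> 'k::comm_ring_1) \<Rightarrow> ('b \<Rightarrow> 'k) \<Rightarrow> 'b \<Rightarrow> 'k)
    \<Rightarrow> ('b \<times> 'b \<Rightarrow> 'k) \<Rightarrow> ('b \<times> 'b \<Rightarrow> 'k) \<Rightarrow> 'b \<times> 'b \<Rightarrow> 'k" where
  "tens_mult B m F G = (\<lambda>(c1, c2). \<Sum>(b1, b2)\<in>B \<times> B. \<Sum>(b1', b2')\<in>B \<times> B.
      F (b1, b2) * G (b1', b2') * m (bvec b1) (bvec b1') c1 * m (bvec b2) (bvec b2') c2)"

definition is_algebra :: "'b set \<Rightarrow> (('b \<Rightarrow> 'k::comm_ring_1) \<Rightarrow> ('b \<Rightarrow> 'k) \<Rightarrow> 'b \<Rightarrow> 'k)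
    \<Rightarrow> ('b \<Rightarrow> 'k) \<Rightarrow> bool" where
  "is_algebra B m u \<longleftrightarrow> finite B \<and> u \<in> vsp B \<and>
     (\<forall>g\<in>vsp B. linear_on B B (\<lambda>f. m f g)) \<and>
     (\<forall>f\<in>vsp B. linear_on B B (\<lambda>g. m f g)) \<and>
     (\<forall>f\<in>vsp B. \<forall>g\<in>vsp B. \<forall>h\<in>vsp B. m (m f g) h = m f (m g h)) \<and>
     (\<forall>f\<in>vsp B. m u f = f \<and> m f u = f)"

definition is_bialgebra :: "'b set \<Rightarrow> (('b \<Rightarrow> 'k::comm_ring_1) \<Rightarrow> ('b \<Rightarrow> 'k) \<Rightarrow> 'b \<Rightarrow> 'k)
    \<Rightarrow> ('b \<Rightarrow> 'k) \<Rightarrow> (('b \<Rightarrow> 'k) \<Rightarrow> 'b \<times> 'b \<Rightarrow> 'k) \<Rightarrow> (('b \<Rightarrow> 'k) \<Rightarrow> 'k) \<Rightarrow> bool" where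
  "is_bialgebra B m u \<Delta> \<epsilon> \<longleftrightarrow> is_algebra B m u \<and>
     linear_on B (B \<times> B) \<Delta> \<and> linear_fun B \<epsilon> \<and>
     \<comment> \<open>coassociativity: (Delta (x) id) Delta = (id (x) Delta) Delta\<close>
     (\<forall>h\<in>vsp B. (\<lambda>(x, y, z). tmap B B \<Delta> id (\<Delta> h) ((x, y), z)) = tmap B B id \<Delta> (\<Delta> h)) \<and>
     \<comment> \<open>counit: (eps (x) id) Delta = id = (id (x) eps) Delta\<close>
     (\<forall>h\<in>vsp B. (\<lambda>c. \<Sum>b\<in>B. \<epsilon> (bvec b) * \<Delta> h (b, c)) = h) \<and>
     (\<forall>h\<in>vsp B. (\<lambda>c. \<Sum>b\<in>B. \<Delta> h (c, b) * \<epsilon> (bvec b)) = h) \<and>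
     \<comment> \<open>Delta and eps are algebra maps\<close>
     (\<forall>f\<in>vsp B. \<forall>g\<in>vsp B. \<Delta> (m f g) = tens_mult B m (\<Delta> f) (\<Delta> g)) \<and> \<Delta> u = tprod u u \<and>
     (\<forall>f\<in>vsp B. \<forall>g\<in>vsp B. \<epsilon> (m f g) = \<epsilon> f * \<epsilon> g) \<and> \<epsilon> u = 1"

definition conv :: "'b set \<Rightarrow> (('b \<Rightarrow> 'k::comm_ring_1) \<Rightarrow> ('b \<Rightarrow> 'k) \<Rightarrow> 'b \<Rightarrow> 'k)
    \<Rightarrow> (('b \<Rightarrow> 'k) \<Rightarrow> 'b \<times> 'b \<Rightarrow> 'k) \<Rightarrow> (('b \<Rightarrow> 'k) \<Rightarrow> 'b \<Rightarrow> 'k)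
    \<Rightarrow> (('b \<Rightarrow> 'k) \<Rightarrow> 'b \<Rightarrow> 'k) \<Rightarrow> ('b \<Rightarrow> 'k) \<Rightarrow> 'b \<Rightarrow> 'k" where
  "conv B m \<Delta> f g = (\<lambda>h. mtens B m (tmap B B f g (\<Delta> h)))"

text \<open>Weak Hopf algebra in the sense of Li: bialgebra with T in Hom(H,H),
  T * id * T = T and id * T * id = id.\<close>
definition is_weak_hopf :: "'b set \<Rightarrow> (('b \<Rightarrow> 'k::comm_ring_1) \<Rightarrow> ('b \<Rightarrow> 'k) \<Rightarrow> 'b \<Rightarrow> 'k)
    \<Rightarrow> ('b \<Rightarrow> 'k) \<Rightarrow> (('b \<Rightarrow> 'k) \<Rightarrow> 'b \<times> 'b \<Rightarrow> 'k) \<Rightarrow> (('b \<Rightarrow> 'k) \<Rightarrow> 'k)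
    \<Rightarrow> (('b \<Rightarrow> 'k) \<Rightarrow> 'b \<Rightarrow> 'k) \<Rightarrow> bool" where
  "is_weak_hopf B m u \<Delta> \<epsilon> T \<longleftrightarrow> is_bialgebra B m u \<Delta> \<epsilon> \<and> linear_on B B T \<and>
     (\<forall>h\<in>vsp B. conv B m \<Delta> (conv B m \<Delta> T id) T h = T h) \<and>
     (\<forall>h\<in>vsp B. conv B m \<Delta> (conv B m \<Delta> id T) id h = h)"

fun apow :: "(('b \<Rightarrow> 'k) \<Rightarrow> ('b \<Rightarrow> 'k) \<Rightarrow> 'b \<Rightarrow> 'k) \<Rightarrow> ('b \<Rightarrow> 'k) \<Rightarrow> ('b \<Rightarrow> 'k) \<Rightarrow> nat \<Rightarrow> 'b \<Rightarrow> 'k" where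
  "apow m u f 0 = u"
| "apow m u f (Suc j) = m f (apow m u f j)"

text \<open>Concrete model: basis elements (i,j), 0 <= i <= 2n, 0 <= j <= 1, standing for
  the monomials Z^i X^j; multiplication
  Z^i X^j * Z^k X^l = q^(-jk) Z^(i+k) X^(j+l) (zero if j+l >= 2), with the exponent
  of Z reduced via Z^(2n+1) = Z.\<close>

definition wH_basis :: "nat \<Rightarrow> (nat \<times> nat) set" where
  "wH_basis n = {0..2 * n} \<times> {0..1}"

definition zred :: "nat \<Rightarrow> nat \<Rightarrow> nat" where
  "zred n e = (if e = 0 then 0 else (e - 1) mod (2 * n) + 1)"

definition wH_mult :: "nat \<Rightarrow> 'k::field \<Rightarrow> ((nat \<times> nat) \<Rightarrow> 'k) \<Rightarrow> ((nat \<times> nat) \<Rightarrow> 'k)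
    \<Rightarrow> (nat \<times> nat) \<Rightarrow> 'k" where
  "wH_mult n q f g = (\<lambda>c. \<Sum>(i, j)\<in>wH_basis n. \<Sum>(k, l)\<in>wH_basis n.
      if j + l \<le> 1 \<and> c = (zred n (i + k), j + l)
      then f (i, j) * g (k, l) * (inverse q) ^ (j * k) else 0)"

end

theory Submission
  imports Defs
begin


definition lin :: "'b set \<Rightarrow> ('b \<Rightarrow> 'c \<Rightarrow> 'k::comm_ring_1) \<Rightarrow> ('b \<Rightarrow> 'k) \<Rightarrow> 'c \<Rightarrow> 'k" where
  "lin B K f = (\<lambda>c. \<Sum>b\<in>B. f b * K b c)"

definition bil :: "'b set \<Rightarrow> ('b \<Rightarrow> 'b \<Rightarrow> 'c \<Rightarrow> 'k::comm_ring_1) \<Rightarrow> ('b \<Rightarrow> 'k) \<Rightarrow> ('b \<Rightarrow> 'k) \<Rightarrow> 'c \<Rightarrow> 'k" where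
  "bil B K f g = (\<lambda>c. \<Sum>x\<in>B. \<Sum>y\<in>B. f x * g y * K x y c)"

definition tri :: "'b set \<Rightarrow> ('b \<Rightarrow> 'b \<Rightarrow> 'b \<Rightarrow> 'c \<Rightarrow> 'k::comm_ring_1) \<Rightarrow> ('b \<Rightarrow> 'k) \<Rightarrow> ('b \<Rightarrow> 'k) \<Rightarrow> ('b \<Rightarrow> 'k) \<Rightarrow> 'c \<Rightarrow> 'k" where
  "tri B A f g h = (\<lambda>c. \<Sum>x\<in>B. \<Sum>y\<in>B. \<Sum>z\<in>B. f x * g y * h z * A x y z c)"

lemma bvec_mult1[simp]: "bvec b x * (y::'k::comm_ring_1) = (if x = b then y else 0)"
  by (simp add: bvec_def)
lemma bvec_mult2[simp]: "(y::'k::comm_ring_1) * bvec b x = (if x = b then y else 0)"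
  by (simp add: bvec_def)

lemma if0_mult[simp]: "(if P then a else 0) * (b::'k::comm_ring_1) = (if P then a * b else 0)"
  by simp
lemma mult_if0[simp]: "(b::'k::comm_ring_1) * (if P then a else 0) = (if P then b * a else 0)"
  by simp

lemma sum_if_const[simp]: "(\<Sum>y\<in>A. if P then f y else 0) = (if P then (\<Sum>y\<in>A. f y) else (0::'k::comm_ring_1))"
  by (cases P) auto

lemma bvec_pair: "(bvec (u, v) (x, y) :: 'k::comm_ring_1) = bvec u x * bvec v y"
  by (simp add: bvec_def)

lemma tprod_bvec: "tprod (bvec u) (bvec v) = (bvec (u, v) :: _ \<Rightarrow> 'k::comm_ring_1)"
  by (auto simp: tprod_def bvec_def fun_eq_iff)

lemma lin_add: "lin B K (\<lambda>p. f p + g p) = (\<lambda>c. lin B K f c + lin B K g c)"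
  by (simp add: lin_def fun_eq_iff sum.distrib algebra_simps)

lemma lin_scale: "lin B K (\<lambda>p. a * f p) = (\<lambda>c. a * lin B K f c)"
  by (simp add: lin_def fun_eq_iff sum_distrib_left algebra_simps)

lemma lin_zero: "lin B K (\<lambda>p. 0) = (\<lambda>c. 0)"
  by (simp add: lin_def)

lemma lin_bvec: "finite B \<Longrightarrow> b \<in> B \<Longrightarrow> lin B K (bvec b) = K b"
  by (simp add: lin_def fun_eq_iff)

lemma lin_bvec_out: "b \<notin> B \<Longrightarrow> lin B K (bvec b) = (\<lambda>c. 0)"
  by (auto simp: lin_def bvec_def fun_eq_iff intro!: sum.neutral)

lemma bil_add1: "bil B K (\<lambda>p. f p + f' p) g = (\<lambda>c. bil B K f g c + bil B K f' g c)"
  by (simp add: bil_def fun_eq_iff sum.distrib algebra_simps)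

lemma bil_add2: "bil B K f (\<lambda>p. g p + g' p) = (\<lambda>c. bil B K f g c + bil B K f g' c)"
  by (simp add: bil_def fun_eq_iff sum.distrib algebra_simps)

lemma bil_scale1: "bil B K (\<lambda>p. a * f p) g = (\<lambda>c. a * bil B K f g c)"
  by (simp add: bil_def fun_eq_iff sum_distrib_left algebra_simps)

lemma bil_scale2: "bil B K f (\<lambda>p. a * g p) = (\<lambda>c. a * bil B K f g c)"
  by (simp add: bil_def fun_eq_iff sum_distrib_left algebra_simps)

lemma bil_zero1: "bil B K (\<lambda>p. 0) g = (\<lambda>c. 0)"
  by (simp add: bil_def)

lemma bil_zero2: "bil B K f (\<lambda>p. 0) = (\<lambda>c. 0)"
  by (simp add: bil_def)

lemma bil_bvec: "finite B \<Longrightarrow> x \<in> B \<Longrightarrow> y \<in> B \<Longrightarrow> bil B K (bvec x) (bvec y) = K x y"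
  by (simp add: bil_def fun_eq_iff)

lemma bil_bvec_out1: "x \<notin> B \<Longrightarrow> bil B K (bvec x) g = (\<lambda>c. 0)"
  by (auto simp: bil_def bvec_def fun_eq_iff intro!: sum.neutral)

lemma bil_bvec_out2: "y \<notin> B \<Longrightarrow> bil B K f (bvec y) = (\<lambda>c. 0)"
  by (auto simp: bil_def bvec_def fun_eq_iff intro!: sum.neutral)

lemma lin_neg: "lin B K (\<lambda>p. - f p) = (\<lambda>c. - lin B K f c)"
  by (simp add: lin_def fun_eq_iff sum_negf)

lemma bil_neg1: "bil B K (\<lambda>p. - f p) g = (\<lambda>c. - bil B K f g c)"
  by (simp add: bil_def fun_eq_iff sum_negf)

lemma bil_neg2: "bil B K f (\<lambda>p. - g p) = (\<lambda>c. - bil B K f g c)"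
  by (simp add: bil_def fun_eq_iff sum_negf)

lemma sum_bvec_sc: "finite B \<Longrightarrow> (\<Sum>c\<in>B. a * bvec P c * f c) = (if P \<in> B then a * f P else (0::'k::comm_ring_1))"
proof -
  assume "finite B"
  have "(\<Sum>c\<in>B. a * bvec P c * f c) = (\<Sum>c\<in>B. if c = P then a * f P else 0)"
    by (rule sum.cong) (auto simp: bvec_def)
  then show ?thesis using \<open>finite B\<close> by (simp add: sum.delta')
qed

lemma sum_bvec_1: "finite B \<Longrightarrow> (\<Sum>c\<in>B. bvec P c * f c) = (if P \<in> B then f P else (0::'k::comm_ring_1))"
  using sum_bvec_sc[of B 1 P f] by simp

lemma lin_diff: "lin B K (\<lambda>p. f p - g p) = (\<lambda>c. lin B K f c - lin B K g c)"
  by (simp add: lin_def fun_eq_iff sum_subtractf algebra_simps)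

lemma bil_diff1: "bil B K (\<lambda>p. f p - f' p) g = (\<lambda>c. bil B K f g c - bil B K f' g c)"
  by (simp add: bil_def fun_eq_iff sum_subtractf algebra_simps)

lemma bil_diff2: "bil B K f (\<lambda>p. g p - g' p) = (\<lambda>c. bil B K f g c - bil B K f g' c)"
  by (simp add: bil_def fun_eq_iff sum_subtractf algebra_simps)

lemmas lin_rules = lin_diff lin_add lin_scale lin_zero lin_bvec lin_bvec_out lin_neg
lemmas bil_rules = bil_diff1 bil_diff2 bil_neg1 bil_neg2 bil_add1 bil_add2 bil_scale1 bil_scale2 bil_zero1 bil_zero2 bil_bvec
  bil_bvec_out1 bil_bvec_out2

lemma lin_lin: "lin C K (lin B K' f) = lin B (\<lambda>d. lin C K (K' d)) f"
  unfolding lin_def fun_eq_iff sum_distrib_right sum_distrib_left mult.assoc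
  by (intro allI sum.swap)

lemma lin_bil: "lin C K (bil B M f g) = bil B (\<lambda>x y. lin C K (M x y)) f g"
proof -
  have "(\<Sum>d\<in>C. (\<Sum>x\<in>B. \<Sum>y\<in>B. f x * g y * M x y d) * K d c) =
        (\<Sum>x\<in>B. \<Sum>y\<in>B. f x * g y * (\<Sum>d\<in>C. M x y d * K d c))" for c
  proof -
    have "(\<Sum>d\<in>C. (\<Sum>x\<in>B. \<Sum>y\<in>B. f x * g y * M x y d) * K d c) =
          (\<Sum>d\<in>C. \<Sum>x\<in>B. \<Sum>y\<in>B. f x * g y * M x y d * K d c)"
      by (simp add: sum_distrib_right)
    also have "\<dots> = (\<Sum>x\<in>B. \<Sum>d\<in>C. \<Sum>y\<in>B. f x * g y * M x y d * K d c)"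
      by (rule sum.swap)
    also have "\<dots> = (\<Sum>x\<in>B. \<Sum>y\<in>B. \<Sum>d\<in>C. f x * g y * M x y d * K d c)"
      by (rule sum.cong[OF refl], rule sum.swap)
    also have "\<dots> = (\<Sum>x\<in>B. \<Sum>y\<in>B. f x * g y * (\<Sum>d\<in>C. M x y d * K d c))"
      by (simp add: sum_distrib_left mult_ac)
    finally show ?thesis .
  qed
  then show ?thesis by (simp add: lin_def bil_def fun_eq_iff)
qed

lemma bil_lin: "bil C N (lin B K f) (lin B K' g) = bil B (\<lambda>x y. bil C N (K x) (K' y)) f g"
proof -
  have "(\<Sum>u\<in>C. \<Sum>v\<in>C. (\<Sum>x\<in>B. f x * K x u) * (\<Sum>y\<in>B. g y * K' y v) * N u v c) =
        (\<Sum>x\<in>B. \<Sum>y\<in>B. f x * g y * (\<Sum>u\<in>C. \<Sum>v\<in>C. K x u * K' y v * N u v c))" for c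
  proof -
    have "(\<Sum>u\<in>C. \<Sum>v\<in>C. (\<Sum>x\<in>B. f x * K x u) * (\<Sum>y\<in>B. g y * K' y v) * N u v c) =
          (\<Sum>u\<in>C. \<Sum>v\<in>C. \<Sum>y\<in>B. \<Sum>x\<in>B. f x * g y * (K x u * K' y v * N u v c))"
      by (simp add: sum_distrib_right sum_distrib_left mult_ac)
    also have "\<dots> = (\<Sum>u\<in>C. \<Sum>v\<in>C. \<Sum>x\<in>B. \<Sum>y\<in>B. f x * g y * (K x u * K' y v * N u v c))"
      by (rule sum.cong[OF refl], rule sum.cong[OF refl], rule sum.swap)
    also have "\<dots> = (\<Sum>u\<in>C. \<Sum>x\<in>B. \<Sum>v\<in>C. \<Sum>y\<in>B. f x * g y * (K x u * K' y v * N u v c))"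
      by (rule sum.cong[OF refl], rule sum.swap)
    also have "\<dots> = (\<Sum>x\<in>B. \<Sum>u\<in>C. \<Sum>v\<in>C. \<Sum>y\<in>B. f x * g y * (K x u * K' y v * N u v c))"
      by (rule sum.swap)
    also have "\<dots> = (\<Sum>x\<in>B. \<Sum>u\<in>C. \<Sum>y\<in>B. \<Sum>v\<in>C. f x * g y * (K x u * K' y v * N u v c))"
      by (intro sum.cong refl) (rule sum.swap)
    also have "\<dots> = (\<Sum>x\<in>B. \<Sum>y\<in>B. \<Sum>u\<in>C. \<Sum>v\<in>C. f x * g y * (K x u * K' y v * N u v c))"
      by (rule sum.cong[OF refl], rule sum.swap)
    also have "\<dots> = (\<Sum>x\<in>B. \<Sum>y\<in>B. f x * g y * (\<Sum>u\<in>C. \<Sum>v\<in>C. K x u * K' y v * N u v c))"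
      by (simp add: sum_distrib_left)
    finally show ?thesis .
  qed
  then show ?thesis by (simp add: lin_def bil_def fun_eq_iff)
qed

lemma bil_swap: "bil B M g f = bil B (\<lambda>x y. M y x) f g"
proof -
  have "(\<Sum>x\<in>B. \<Sum>y\<in>B. f x * g y * M y x c) = (\<Sum>y\<in>B. \<Sum>x\<in>B. f x * g y * M y x c)" for c
    by (rule sum.swap)
  then show ?thesis by (simp add: bil_def fun_eq_iff mult_ac)
qed

lemma lin_cong: "(\<And>b. b \<in> B \<Longrightarrow> K b = K' b) \<Longrightarrow> lin B K f = lin B K' f"
  by (simp add: lin_def)

lemma bil_cong: "(\<And>x y. x \<in> B \<Longrightarrow> y \<in> B \<Longrightarrow> K x y = K' x y) \<Longrightarrow> bil B K f g = bil B K' f g"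
  by (simp add: bil_def)

lemma lin_id: "finite B \<Longrightarrow> f \<in> vsp B \<Longrightarrow> lin B bvec f = f"
  by (auto simp: lin_def vsp_def fun_eq_iff)

lemma lin_vsp: "(\<And>b. b \<in> B \<Longrightarrow> K b \<in> vsp C) \<Longrightarrow> lin B K f \<in> vsp C"
  by (auto simp: lin_def vsp_def intro!: sum.neutral)

lemma bil_vsp: "(\<And>x y. x \<in> B \<Longrightarrow> y \<in> B \<Longrightarrow> K x y \<in> vsp C) \<Longrightarrow> bil B K f g \<in> vsp C"
  by (auto simp: bil_def vsp_def intro!: sum.neutral)

lemma bil_as_lin1: "finite B \<Longrightarrow> bil B N F h = lin B (\<lambda>u. bil B N (bvec u) h) F"
  by (simp add: lin_def bil_def fun_eq_iff sum_distrib_left mult_ac)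

lemma bil_as_lin2: "finite B \<Longrightarrow> bil B N f G = lin B (\<lambda>v. bil B N f (bvec v)) G"
  apply (simp add: lin_def bil_def fun_eq_iff sum_distrib_left mult_ac)
  apply (intro allI)
  apply (rule sum.swap)
  done

lemma tri1: "bil B (\<lambda>x y. lin B (A x y) h) f g = tri B A f g h"
  by (simp add: lin_def bil_def tri_def fun_eq_iff sum_distrib_left mult_ac)

lemma tri2: "lin B (\<lambda>x. bil B (A x) g h) f = tri B A f g h"
  by (simp add: lin_def bil_def tri_def fun_eq_iff sum_distrib_left mult_ac)

declare bvec_mult1[simp del] bvec_mult2[simp del] if0_mult[simp del] mult_if0[simp del] sum_if_const[simp del]



section \<open>zred arithmetic\<close>

lemma zred_0[simp]: "zred n 0 = 0" by (simp add: zred_def)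

lemma zred_eq0[simp]: "zred n e = 0 \<longleftrightarrow> e = 0" by (simp add: zred_def)

lemma zred_le: "1 \<le> n \<Longrightarrow> zred n e \<le> 2 * n"
  by (simp add: zred_def Suc_leI)

lemma zred_id: "e \<le> 2 * n \<Longrightarrow> zred n e = e"
  by (cases e) (auto simp: zred_def)

lemma zred_mod: "zred n e mod (2 * n) = e mod (2 * n)"
  by (cases e) (auto simp: zred_def mod_Suc_eq)

lemma Suc_mod_cancel: "Suc x mod m = Suc y mod m \<Longrightarrow> x mod m = y mod m"
  by (metis Zero_not_Suc mod_Suc nat.inject)

lemma zred_cong: "(a = 0 \<longleftrightarrow> b = 0) \<Longrightarrow> a mod (2 * n) = b mod (2 * n) \<Longrightarrow> zred n a = zred n b"
  apply (cases a; cases b; simp add: zred_def)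
  using Suc_mod_cancel by blast

lemma zred_add_left[simp]: "zred n (zred n a + b) = zred n (a + b)"
  by (rule zred_cong) (simp, metis mod_add_left_eq zred_mod)

lemma zred_add_right[simp]: "zred n (a + zred n b) = zred n (a + b)"
  by (rule zred_cong) (simp, metis mod_add_right_eq zred_mod)

lemma zred_mult_zred[simp]: "zred n (a + c * zred n e) = zred n (a + c * e)"
  by (rule zred_cong) (simp, metis mod_add_right_eq mod_mult_right_eq zred_mod)

lemma zred_mult_zred'[simp]: "zred n (c * zred n e) = zred n (c * e)"
  using zred_mult_zred[of n 0 c e] by simp

lemma zred_add_mid1[simp]: "zred n (a + zred n b + c) = zred n (a + b + c)"
  by (metis add.assoc add.commute zred_add_right)

lemma zred_add_mid2[simp]: "zred n (a + (zred n b + c)) = zred n (a + (b + c))"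
  by (metis add.assoc add.commute zred_add_right)

lemma zred_add_mid3[simp]: "zred n (a + (b + zred n c)) = zred n (a + (b + c))"
  by (metis add.assoc zred_add_right)

lemma zred_zred[simp]: "zred n (zred n a) = zred n a"
  using zred_add_left[of n a 0] by simp


section \<open>Structure constants\<close>

definition mc :: "'k::field \<Rightarrow> nat \<times> nat \<Rightarrow> nat \<times> nat \<Rightarrow> 'k" where
  "mc q x y = (if snd x + snd y \<le> 1 then inverse q ^ (snd x * fst y) else 0)"

definition mp :: "nat \<Rightarrow> nat \<times> nat \<Rightarrow> nat \<times> nat \<Rightarrow> nat \<times> nat" where
  "mp n x y = (zred n (fst x + fst y), snd x + snd y)"

definition Mk :: "nat \<Rightarrow> 'k::field \<Rightarrow> nat \<times> nat \<Rightarrow> nat \<times> nat \<Rightarrow> nat \<times> nat \<Rightarrow> 'k" where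
  "Mk n q x y = (\<lambda>c. mc q x y * bvec (mp n x y) c)"

definition dd :: "'k::field \<Rightarrow> 'k \<Rightarrow> nat \<Rightarrow> 'k" where
  "dd q a i = a * (1 - inverse q ^ (2 * i))"

definition DM :: "nat \<Rightarrow> 'k::field \<Rightarrow> 'k \<Rightarrow> nat \<times> nat \<Rightarrow> (nat \<times> nat) \<times> (nat \<times> nat) \<Rightarrow> 'k" where
  "DM n q a x = (if snd x = 0
     then (\<lambda>p. bvec ((fst x, 0), (fst x, 0)) p + dd q a (fst x) * bvec ((zred n (n + fst x), 1), (fst x, 1)) p)
     else (\<lambda>p. bvec ((fst x, 1), (fst x, 0)) p + bvec ((zred n (n + fst x), 0), (fst x, 1)) p))"

definition tz :: "nat \<Rightarrow> nat \<Rightarrow> nat" where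
  "tz n i = zred n ((2 * n - 1) * i)"

definition TM :: "nat \<Rightarrow> 'k::field \<Rightarrow> nat \<times> nat \<Rightarrow> nat \<times> nat \<Rightarrow> 'k" where
  "TM n q x = (if snd x = 0 then bvec (tz n (fst x), 0)
     else (\<lambda>c. - (inverse q ^ ((2 * n - 1) * fst x)) * bvec (zred n (n + tz n (fst x)), 1) c))"

definition EM :: "nat \<times> nat \<Rightarrow> 'k::field" where
  "EM x = (if snd x = 0 then 1 else 0)"

definition MM :: "('b \<Rightarrow> 'b \<Rightarrow> 'c \<Rightarrow> 'k::comm_ring_1) \<Rightarrow> 'b \<times> 'b \<Rightarrow> 'b \<times> 'b \<Rightarrow> 'c \<times> 'c \<Rightarrow> 'k" where
  "MM K u v = (\<lambda>p. K (fst u) (fst v) (fst p) * K (snd u) (snd v) (snd p))"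

definition TK :: "('b \<Rightarrow> 'c \<Rightarrow> 'k::comm_ring_1) \<Rightarrow> ('b2 \<Rightarrow> 'c2 \<Rightarrow> 'k) \<Rightarrow> 'b \<times> 'b2 \<Rightarrow> 'c \<times> 'c2 \<Rightarrow> 'k" where
  "TK L M bb = (\<lambda>cc. L (fst bb) (fst cc) * M (snd bb) (snd cc))"

definition CK :: "nat \<Rightarrow> 'k::field \<Rightarrow> 'k \<Rightarrow> (nat \<times> nat \<Rightarrow> nat \<times> nat \<Rightarrow> 'k) \<Rightarrow> (nat \<times> nat \<Rightarrow> nat \<times> nat \<Rightarrow> 'k)
    \<Rightarrow> nat \<times> nat \<Rightarrow> nat \<times> nat \<Rightarrow> 'k" where
  "CK n q a KF KG d = lin (wH_basis n \<times> wH_basis n) (\<lambda>bb. bil (wH_basis n) (Mk n q) (KF (fst bb)) (KG (snd bb))) (DM n q a d)"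

definition ee :: "nat \<Rightarrow> nat \<Rightarrow> nat" where "ee n i = (if i = 0 then 0 else 2 * n)"

definition CK1 :: "nat \<Rightarrow> nat \<times> nat \<Rightarrow> nat \<times> nat \<Rightarrow> 'k::field" where
  "CK1 n d = (if snd d = 0 then bvec (ee n (fst d), 0) else (\<lambda>c. 0))"

definition CK2 :: "nat \<Rightarrow> nat \<times> nat \<Rightarrow> nat \<times> nat \<Rightarrow> 'k::field" where
  "CK2 n d = (if snd d = 0 then bvec (ee n (fst d), 0) else if fst d = 0 then (\<lambda>c. bvec (0, 1) c - bvec (2 * n, 1) c) else (\<lambda>c. 0))"

lemma mem_wH[simp]: "(x, y) \<in> wH_basis n \<longleftrightarrow> x \<le> 2 * n \<and> y \<le> 1"
  by (auto simp: wH_basis_def)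

lemma finite_wH[simp]: "finite (wH_basis n)"
  by (simp add: wH_basis_def)

lemma wH_mult_bil: "wH_mult n q = bil (wH_basis n) (Mk n q)"
  unfolding wH_mult_def bil_def Mk_def mc_def mp_def fun_eq_iff
  by (auto simp: bvec_def intro!: sum.cong)

lemma DM0[simp]: "DM n q a (i, 0) = (\<lambda>p. bvec ((i, 0), (i, 0)) p + dd q a i * bvec ((zred n (n + i), 1), (i, 1)) p)"
  by (simp add: DM_def)
lemma DM1[simp]: "DM n q a (i, Suc 0) = (\<lambda>p. bvec ((i, 1), (i, 0)) p + bvec ((zred n (n + i), 0), (i, 1)) p)"
  by (simp add: DM_def)
lemma TM0[simp]: "TM n q (i, 0) = bvec (tz n i, 0)"
  by (simp add: TM_def)
lemma TM1[simp]: "TM n q (i, Suc 0) = (\<lambda>c. - (inverse q ^ ((2 * n - 1) * i)) * bvec (zred n (n + tz n i), 1) c)"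
  by (simp add: TM_def)
lemma EM0[simp]: "EM (i, 0) = 1" and EM1[simp]: "EM (i, Suc 0) = 0" and EM1'[simp]: "EM (i, 1) = 0"
  by (simp_all add: EM_def)
lemma DM1'[simp]: "DM n q a (i, 1) = (\<lambda>p. bvec ((i, 1), (i, 0)) p + bvec ((zred n (n + i), 0), (i, 1)) p)"
  by (simp add: DM_def)
lemma TM1'[simp]: "TM n q (i, 1) = (\<lambda>c. - (inverse q ^ ((2 * n - 1) * i)) * bvec (zred n (n + tz n i), 1) c)"
  by (simp add: TM_def)
lemma Mk_eq: "Mk n q (i, j) (k, l) = (\<lambda>c. (if j + l \<le> 1 then inverse q ^ (j * k) else 0) * bvec (zred n (i + k), j + l) c)"
  by (auto simp: Mk_def mc_def mp_def fun_eq_iff)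

lemma dd_0[simp]: "dd q a 0 = 0" by (simp add: dd_def)

locale wh =
  fixes n :: nat and q :: "'k::field"
  assumes n1: "1 \<le> n" and qr: "q ^ (2 * n) = 1"
    and qp: "\<forall>j. 0 < j \<and> j < 2 * n \<longrightarrow> q ^ j \<noteq> 1"
begin

abbreviation "B \<equiv> wH_basis n"

lemma q_nz: "q \<noteq> 0"
proof
  assume "q = 0" then have "q ^ (2 * n) = 0" using n1 by simp
  then show False using qr by simp
qed

lemma q_ne1: "q \<noteq> 1"
proof -
  have "q ^ 1 \<noteq> 1" using qp n1 by auto
  then show ?thesis by simp
qed

lemma qn: "q ^ n = -1"
proof -
  have "q ^ n * q ^ n = 1" using qr by (simp add: power_add[symmetric] mult_2)
  then have "(q ^ n - 1) * (q ^ n + 1) = 0" by (simp add: algebra_simps)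
  moreover have "q ^ n \<noteq> 1" using qp n1 by auto
  ultimately show ?thesis by (simp add: eq_neg_iff_add_eq_0)
qed

lemma qi_2n[simp]: "inverse q ^ (2 * n) = 1" using qr by (simp add: power_inverse)
lemma qi_n: "inverse q ^ n = -1" using qn by (simp add: power_inverse)

lemma qi_mod: "inverse q ^ e = inverse q ^ (e mod (2 * n))"
proof -
  have 1: "inverse q ^ (2 * n * (e div (2 * n))) = 1"
    by (subst power_mult) (simp only: qi_2n power_one)
  have "inverse q ^ e = inverse q ^ (2 * n * (e div (2 * n))) * inverse q ^ (e mod (2 * n))"
    by (simp only: power_add[symmetric] mult_div_mod_eq)
  then show ?thesis by (simp only: 1 mult_1)
qed

lemma qi_cong: "a mod (2 * n) = b mod (2 * n) \<Longrightarrow> inverse q ^ a = inverse q ^ b"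
  using qi_mod[of a] qi_mod[of b] by simp

lemma qi_zred[simp]: "inverse q ^ zred n e = inverse q ^ e"
  by (rule qi_cong) (simp add: zred_mod)

lemma zle[simp]: "zred n e \<le> 2 * n" using zred_le n1 by blast


lemma bin_cases: "j \<le> (1::nat) \<Longrightarrow> j = 0 \<or> j = Suc 0" by auto

lemma assoc_basis:
  assumes "x \<in> B" "y \<in> B" "z \<in> B"
  shows "bil B (Mk n q) (Mk n q x y) (bvec z) = bil B (Mk n q) (bvec x) (Mk n q y z)"
proof -
  obtain i j k l r s where xyz: "x = (i, j)" "y = (k, l)" "z = (r, s)" and
    b: "i \<le> 2 * n" "k \<le> 2 * n" "r \<le> 2 * n" "j \<le> 1" "l \<le> 1" "s \<le> 1"
    using assms by (cases x; cases y; cases z) auto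
  show ?thesis unfolding xyz
    using bin_cases[OF b(4)] bin_cases[OF b(5)] bin_cases[OF b(6)] b(1-3)
    by (auto simp: Mk_eq bil_rules add.assoc power_add fun_eq_iff)
qed


lemma dd_zred[simp]: "dd q a (zred n e) = dd q a e"
proof -
  have "inverse q ^ (2 * zred n e) = inverse q ^ (2 * e)"
  proof (rule qi_cong)
    have "2 * zred n e mod (2*n) = 2 * (zred n e mod (2*n)) mod (2*n)" by (rule mod_mult_right_eq[symmetric])
    also have "\<dots> = 2 * (e mod (2*n)) mod (2*n)" by (simp only: zred_mod)
    also have "\<dots> = 2*e mod (2*n)" by (rule mod_mult_right_eq)
    finally show "2 * zred n e mod (2*n) = 2*e mod (2*n)" .
  qed
  then show ?thesis by (simp add: dd_def)
qed

lemma dd_add: "dd q a (i + k) = dd q a k + dd q a i * inverse q ^ k * inverse q ^ k"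
proof -
  have 1: "inverse q ^ (2*(i+k)) = inverse q^(2*i) * inverse q ^(2*k)" by (simp add: power_add distrib_left)
  have 2: "inverse q ^ (2*k) = inverse q^k * inverse q^k" by (simp add: mult_2 power_add)
  show ?thesis unfolding dd_def 1 2 by (simp add: algebra_simps)
qed

lemma delta_mult_basis:
  assumes "x \<in> B" "y \<in> B"
  shows "lin B (DM n q a) (Mk n q x y) = bil (B \<times> B) (MM (Mk n q)) (DM n q a x) (DM n q a y)"
proof -
  obtain i j k l where xyz: "x = (i, j)" "y = (k, l)" and
    b: "i \<le> 2 * n" "k \<le> 2 * n" "j \<le> 1" "l \<le> 1"
    using assms by (cases x; cases y) auto
  show ?thesis unfolding xyz
    using bin_cases[OF b(3)] bin_cases[OF b(4)] b(1-2)
    apply (elim disjE)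
    apply (simp_all add: Mk_eq bil_rules lin_rules MM_def)
    apply (simp_all add: fun_eq_iff add_ac power_add)
    apply (auto simp: dd_add qi_n algebra_simps bvec_pair)
    done
qed


lemma tz_0[simp]: "tz n 0 = 0" by (simp add: tz_def)

lemma tz_le[simp]: "tz n e \<le> 2 * n" by (simp add: tz_def)

lemma qi_mult_zred[simp]: "inverse q ^ (c * zred n e) = inverse q ^ (c * e)"
  by (rule qi_cong) (metis mod_mult_right_eq zred_mod)

lemma qi_neg: "inverse q ^ ((2 * n - 1) * k) * inverse q ^ k = 1"
proof -
  have "(2 * n - 1) * k + k = 2 * n * k" using n1 by (simp add: algebra_simps)
  then have "inverse q ^ ((2 * n - 1) * k) * inverse q ^ k = inverse q ^ (2 * n * k)"
    by (metis power_add)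
  also have "\<dots> = 1" by (subst power_mult) (simp only: qi_2n power_one)
  finally show ?thesis .
qed

lemma anti_basis:
  assumes "x \<in> B" "y \<in> B"
  shows "lin B (TM n q) (Mk n q x y) = bil B (Mk n q) (TM n q y) (TM n q x)"
proof -
  obtain i j k l where xyz: "x = (i, j)" "y = (k, l)" and
    b: "i \<le> 2 * n" "k \<le> 2 * n" "j \<le> 1" "l \<le> 1"
    using assms by (cases x; cases y) auto
  define N where "N = 2 * n - 1"
  have N: "2 * n - Suc 0 = N" by (simp add: N_def)
  have c3: "inverse q ^ k * inverse q ^ (N * i + N * k) = inverse q ^ (N * i)"
  proof -
    have 1: "inverse q ^ k * inverse q ^ (N * i + N * k) = inverse q ^ (N * i) * (inverse q ^ (N * k) * inverse q ^ k)"
      by (simp add: power_add mult_ac)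
    have e: "inverse q ^ (N * k) * inverse q ^ k = 1" using qi_neg[of k] by (simp only: N_def)
    show ?thesis by (simp only: 1 e mult_1_right)
  qed
  show ?thesis unfolding xyz
    using bin_cases[OF b(3)] bin_cases[OF b(4)] b(1-2)
    apply (elim disjE)
    apply (simp_all add: Mk_eq bil_rules lin_rules)
    apply (simp_all add: fun_eq_iff tz_def N)
    apply (simp_all add: algebra_simps)
    subgoal by (simp add: power_add)
    subgoal using c3 by (simp add: mult.assoc[symmetric])
    done
qed

lemma dd_n: "dd q a (n + i) = dd q a i"
proof -
  have "inverse q ^ (2 * (n + i)) = inverse q ^ (2 * i)"
    by (simp add: distrib_left power_add)
  then show ?thesis by (simp add: dd_def)
qed

lemma zred_nni: "i \<le> 2 * n \<Longrightarrow> zred n (n + (n + i)) = (if i = 0 then 2 * n else i)"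
proof (cases "i = 0")
  case True then show ?thesis by (simp add: zred_id mult_2)
next
  case False
  assume i: "i \<le> 2 * n"
  have "zred n (n + (n + i)) = zred n i"
    by (rule zred_cong) (use False in \<open>simp_all add: mult_2 add.assoc[symmetric]\<close>)
  then show ?thesis using False i by (simp add: zred_id)
qed

lemma coassoc_basis:
  assumes "d \<in> B"
  shows "(\<lambda>(x, y, z). lin (B \<times> B) (TK (DM n q a) bvec) (DM n q a d) ((x, y), z))
       = lin (B \<times> B) (TK bvec (DM n q a)) (DM n q a d)"
proof -
  obtain i j where xyz: "d = (i, j)" and b: "i \<le> 2 * n" "j \<le> 1"
    using assms by (cases d) auto
  show ?thesis unfolding xyz
    using bin_cases[OF b(2)] b(1)
    apply (elim disjE)
    apply (simp_all add: lin_rules TK_def)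
    apply (simp_all add: fun_eq_iff bvec_pair zred_nni dd_n)
    apply (auto simp: algebra_simps)
    done
qed

lemma counit_basis1:
  assumes "d \<in> B"
  shows "lin (B \<times> B) (TK (\<lambda>b c. EM b) bvec) (DM n q a d) = (\<lambda>c. bvec d (snd c))"
proof -
  obtain i j where xyz: "d = (i, j)" and b: "i \<le> 2 * n" "j \<le> 1"
    using assms by (cases d) auto
  show ?thesis unfolding xyz
    using bin_cases[OF b(2)] b(1)
    apply (elim disjE)
    apply (simp_all add: lin_rules TK_def)
    done
qed

lemma counit_basis2:
  assumes "d \<in> B"
  shows "lin (B \<times> B) (TK bvec (\<lambda>b c. EM b)) (DM n q a d) = (\<lambda>c. bvec d (fst c))"
proof -
  obtain i j where xyz: "d = (i, j)" and b: "i \<le> 2 * n" "j \<le> 1"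
    using assms by (cases d) auto
  show ?thesis unfolding xyz
    using bin_cases[OF b(2)] b(1)
    apply (elim disjE)
    apply (simp_all add: lin_rules TK_def)
    done
qed

lemma eps_basis:
  assumes "x \<in> B" "y \<in> B"
  shows "(\<Sum>c\<in>B. Mk n q x y c * EM c) = EM x * EM y"
proof -
  obtain i j k l where xyz: "x = (i, j)" "y = (k, l)" and
    b: "i \<le> 2 * n" "k \<le> 2 * n" "j \<le> 1" "l \<le> 1"
    using assms by (cases x; cases y) auto
  show ?thesis unfolding xyz
    using bin_cases[OF b(3)] bin_cases[OF b(4)] b(1-2)
    apply (elim disjE)
    apply (simp_all add: Mk_eq sum_bvec_sc sum_bvec_1)
    done
qed

lemma zred_2ni: "zred n (2 * n * i) = ee n i"
proof (cases "i = 0")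
  case False
  have "zred n (2 * n * i) = zred n (2 * n)"
    by (rule zred_cong) (use False n1 in auto)
  then show ?thesis using False by (simp add: zred_id ee_def)
qed (simp add: ee_def)

lemma zred_n2nt: "zred n (n + 2 * n * t) = n"
proof -
  have "zred n (n + 2 * n * t) = zred n n" by (rule zred_cong) (use n1 in auto)
  then show ?thesis by (simp add: zred_id)
qed

lemma zred_2n_add: "0 < x \<Longrightarrow> zred n (2 * n + x) = zred n x"
  by (rule zred_cong) auto

lemma zred_3n: "zred n (3 * n + x) = zred n (n + x)"
proof -
  have "3 * n + x = 2 * n + (n + x)" by simp
  then show ?thesis using zred_2n_add[of "n + x"] n1 by simp
qed

lemma N_facts:
  assumes "N = 2 * n - 1"
  shows "N * i + i = 2 * n * i" "n + N * i + i = n + 2 * n * i"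
    "N * (n + i) + i = n + 2 * n * (n - 1 + i)"
    "i + N * i = 2 * n * i" "n + i + (n + N * i) = 2 * n * Suc i"
    "0 < N"
    "inverse q ^ (N * i) * inverse q ^ i = 1"
proof -
  obtain m where m: "n = Suc m" using n1 by (cases n) auto
  show "N * i + i = 2 * n * i" "n + N * i + i = n + 2 * n * i"
    "N * (n + i) + i = n + 2 * n * (n - 1 + i)"
    "i + N * i = 2 * n * i" "n + i + (n + N * i) = 2 * n * Suc i"
    "0 < N"
    using assms unfolding m by (simp_all add: algebra_simps)
  show "inverse q ^ (N * i) * inverse q ^ i = 1" using qi_neg assms by simp
qed

lemma ck1:
  assumes "d \<in> B"
  shows "CK n q a (TM n q) bvec d = CK1 n d"
proof -
  obtain i j where xyz: "d = (i, j)" and b: "i \<le> 2 * n" "j \<le> 1"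
    using assms by (cases d) auto
  define N where "N = 2 * n - 1"
  have N: "2 * n - Suc 0 = N" by (simp add: N_def)
  show ?thesis unfolding xyz CK_def CK1_def
    using bin_cases[OF b(2)] b(1)
    apply (elim disjE)
    apply (simp_all add: lin_rules bil_rules Mk_eq)
    apply (simp_all add: fun_eq_iff tz_def N N_facts[OF N_def] zred_2ni zred_n2nt)
    done
qed

lemma CK1_0[simp]: "CK1 n (i, 0) = bvec (ee n i, 0)" and CK1_1[simp]: "CK1 n (i, Suc 0) = (\<lambda>c. 0)"
  and CK1_1'[simp]: "CK1 n (i, 1) = (\<lambda>c. 0)"
  by (simp_all add: CK1_def)

lemma CK2_0[simp]: "CK2 n (i, 0) = bvec (ee n i, 0)"
  and CK2_1[simp]: "CK2 n (i, Suc 0) = (if i = 0 then (\<lambda>c. bvec (0, 1) c - bvec (2 * n, 1) c) else (\<lambda>c. 0))"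
  and CK2_1'[simp]: "CK2 n (i, 1) = (if i = 0 then (\<lambda>c. bvec (0, 1) c - bvec (2 * n, 1) c) else (\<lambda>c. 0))"
  by (simp_all add: CK2_def)

lemma ee_le[simp]: "ee n i \<le> 2 * n" by (simp add: ee_def)

lemma ck2:
  assumes "d \<in> B"
  shows "CK n q a bvec (TM n q) d = CK2 n d"
proof -
  obtain i j where xyz: "d = (i, j)" and b: "i \<le> 2 * n" "j \<le> 1"
    using assms by (cases d) auto
  define N where "N = 2 * n - 1"
  have N: "2 * n - Suc 0 = N" by (simp add: N_def)
  show ?thesis unfolding xyz CK_def
    using bin_cases[OF b(2)] b(1)
    apply (elim disjE)
    apply (simp_all add: lin_rules bil_rules Mk_eq)
    apply (simp_all add: fun_eq_iff tz_def N N_facts[OF N_def] zred_2ni zred_n2nt)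
    apply (auto simp: ee_def zred_2n_add N_facts[OF N_def] zred_id zred_3n zred_2ni mult_2[symmetric])
    done
qed

lemma wa1:
  assumes "d \<in> B"
  shows "CK n q a (CK1 n) (TM n q) d = TM n q d"
proof -
  obtain i j where xyz: "d = (i, j)" and b: "i \<le> 2 * n" "j \<le> 1"
    using assms by (cases d) auto
  define N where "N = 2 * n - 1"
  have N: "2 * n - Suc 0 = N" by (simp add: N_def)
  show ?thesis unfolding xyz CK_def
    using bin_cases[OF b(2)] b(1)
    apply (elim disjE)
    apply (simp_all add: lin_rules bil_rules Mk_eq)
    apply (simp_all add: fun_eq_iff tz_def N N_facts[OF N_def] zred_2ni zred_n2nt)
    apply (auto simp: ee_def zred_2n_add N_facts[OF N_def] zred_id zred_3n zred_2ni mult_2[symmetric])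
    done
qed

lemma wa2:
  assumes "d \<in> B"
  shows "CK n q a (CK2 n) bvec d = bvec d"
proof -
  obtain i j where xyz: "d = (i, j)" and b: "i \<le> 2 * n" "j \<le> 1"
    using assms by (cases d) auto
  define N where "N = 2 * n - 1"
  have N: "2 * n - Suc 0 = N" by (simp add: N_def)
  show ?thesis unfolding xyz CK_def
    using bin_cases[OF b(2)] b(1)
    apply (elim disjE)
    apply (simp_all add: lin_rules bil_rules Mk_eq)
    apply (simp_all add: fun_eq_iff tz_def N N_facts[OF N_def] zred_2ni zred_n2nt)
    apply (auto simp: ee_def zred_2n_add N_facts[OF N_def] zred_id zred_3n zred_2ni mult_2[symmetric])
    done
qed

end



lemma sum_times: "(\<Sum>p\<in>A \<times> B. f p) = (\<Sum>x\<in>A. \<Sum>y\<in>B. f (x, y))"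
  by (simp add: sum.cartesian_product)

lemma tri3: "bil B (\<lambda>y z. lin B (\<lambda>x. A x y z) f) g h = tri B A f g h"
proof -
  have "(\<Sum>y\<in>B. \<Sum>z\<in>B. g y * h z * (\<Sum>x\<in>B. f x * A x y z c)) =
        (\<Sum>x\<in>B. \<Sum>y\<in>B. \<Sum>z\<in>B. f x * g y * h z * A x y z c)" for c
  proof -
    have "(\<Sum>y\<in>B. \<Sum>z\<in>B. g y * h z * (\<Sum>x\<in>B. f x * A x y z c)) =
          (\<Sum>y\<in>B. \<Sum>z\<in>B. \<Sum>x\<in>B. f x * g y * h z * A x y z c)"
      by (simp add: sum_distrib_left mult_ac)
    also have "\<dots> = (\<Sum>y\<in>B. \<Sum>x\<in>B. \<Sum>z\<in>B. f x * g y * h z * A x y z c)"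
      by (rule sum.cong[OF refl], rule sum.swap)
    also have "\<dots> = (\<Sum>x\<in>B. \<Sum>y\<in>B. \<Sum>z\<in>B. f x * g y * h z * A x y z c)"
      by (rule sum.swap)
    finally show ?thesis .
  qed
  then show ?thesis by (simp add: bil_def lin_def tri_def fun_eq_iff)
qed

lemma tri_cong: "(\<And>x y z. x \<in> B \<Longrightarrow> y \<in> B \<Longrightarrow> z \<in> B \<Longrightarrow> A x y z = A' x y z) \<Longrightarrow> tri B A f g h = tri B A' f g h"
  by (simp add: tri_def)

lemma tmap_lin: "tmap B B2 L M F = lin (B \<times> B2) (TK (\<lambda>b. L (bvec b)) (\<lambda>b. M (bvec b))) F"
  by (simp add: tmap_def lin_def TK_def fun_eq_iff split_beta mult_ac)

lemma mtens_lin: "mtens B m F = lin (B \<times> B) (\<lambda>bb. m (bvec (fst bb)) (bvec (snd bb))) F"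
  by (simp add: mtens_def lin_def fun_eq_iff split_beta)

lemma lin_TK_bil: "finite B \<Longrightarrow> lin (B \<times> B) (\<lambda>p. M (fst p) (snd p)) (TK L R bb) = bil B M (L (fst bb)) (R (snd bb))"
  by (simp add: lin_def bil_def TK_def fun_eq_iff sum_times mult_ac)

lemma tens_bil: "finite B \<Longrightarrow> tens_mult B (bil B M) F G = bil (B \<times> B) (MM M) F G"
proof (rule ext, clarify)
  fix c1 c2 assume B: "finite B"
  have "tens_mult B (bil B M) F G (c1, c2) = (\<Sum>p\<in>B \<times> B. \<Sum>p'\<in>B \<times> B.
      F p * G p' * M (fst p) (fst p') c1 * M (snd p) (snd p') c2)"
    unfolding tens_mult_def split_beta
    by (intro sum.cong refl) (auto simp: B bil_bvec)
  also have "\<dots> = bil (B \<times> B) (MM M) F G (c1, c2)"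
    by (simp add: bil_def MM_def mult_ac)
  finally show "tens_mult B (bil B M) F G (c1, c2) = bil (B \<times> B) (MM M) F G (c1, c2)" .
qed

lemma bridge1: "finite B \<Longrightarrow> c \<in> B \<Longrightarrow> (\<Sum>b\<in>B. g b * F (b, c)) = lin (B \<times> B) (TK (\<lambda>b _. g b) bvec) F (c0, c)"
proof -
  assume B: "finite B" "c \<in> B"
  have "lin (B \<times> B) (TK (\<lambda>b _. g b) bvec) F (c0, c) = (\<Sum>b\<in>B. \<Sum>b2\<in>B. F (b, b2) * (g b * bvec b2 c))"
    by (simp add: lin_def TK_def sum_times)
  also have "\<dots> = (\<Sum>b\<in>B. g b * F (b, c))"
    using B by (simp add: bvec_mult2 mult_if0 sum_if_const sum.delta sum.delta' mult_ac)
  finally show ?thesis by simp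
qed

lemma bridge2: "finite B \<Longrightarrow> c \<in> B \<Longrightarrow> (\<Sum>b\<in>B. F (c, b) * g b) = lin (B \<times> B) (TK bvec (\<lambda>b _. g b)) F (c, c0)"
proof -
  assume B: "finite B" "c \<in> B"
  have "lin (B \<times> B) (TK bvec (\<lambda>b _. g b)) F (c, c0) = (\<Sum>b\<in>B. \<Sum>b2\<in>B. F (b, b2) * (bvec b c * g b2))"
    by (simp add: lin_def TK_def sum_times)
  also have "\<dots> = (\<Sum>b2\<in>B. F (c, b2) * g b2)"
    using B by (simp add: bvec_mult1 mult_if0 sum_if_const sum.delta sum.delta' mult_ac)
  finally show ?thesis by simp
qed


lemma bvec_vsp: "b \<in> B \<Longrightarrow> (bvec b :: _ \<Rightarrow> 'k::comm_ring_1) \<in> vsp B"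
  by (auto simp: vsp_def bvec_def)

lemma vsp_add: "f \<in> vsp B \<Longrightarrow> g \<in> vsp B \<Longrightarrow> (\<lambda>x. f x + (g x :: 'k::comm_ring_1)) \<in> vsp B"
  by (auto simp: vsp_def)

lemma vsp_scale: "f \<in> vsp B \<Longrightarrow> (\<lambda>x. c * (f x :: 'k::comm_ring_1)) \<in> vsp B"
  by (auto simp: vsp_def)

context wh
begin

lemma Mk_vsp: "Mk n q x y \<in> vsp B"
  by (auto simp: vsp_def Mk_def mc_def mp_def bvec_def)

lemma DM_vsp: "d \<in> B \<Longrightarrow> DM n q a d \<in> vsp (B \<times> B)"
  by (cases d) (auto simp: vsp_def DM_def bvec_def)

lemma TM_vsp: "d \<in> B \<Longrightarrow> TM n q d \<in> vsp B"
  by (cases d) (auto simp: vsp_def TM_def bvec_def)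

lemma m_bvec: "x \<in> B \<Longrightarrow> y \<in> B \<Longrightarrow> wH_mult n q (bvec x) (bvec y) = Mk n q x y"
  by (simp add: wH_mult_bil bil_bvec)

lemma assoc: "wH_mult n q (wH_mult n q f g) h = wH_mult n q f (wH_mult n q g h)"
proof -
  let ?M = "Mk n q"
  have "bil B ?M (bil B ?M f g) h = lin B (\<lambda>u. bil B ?M (bvec u) h) (bil B ?M f g)"
    by (rule bil_as_lin1) simp
  also have "\<dots> = bil B (\<lambda>x y. lin B (\<lambda>u. bil B ?M (bvec u) h) (?M x y)) f g"
    by (rule lin_bil)
  also have "\<dots> = bil B (\<lambda>x y. bil B ?M (?M x y) h) f g"
    by (rule bil_cong) (rule bil_as_lin1[symmetric], simp)
  also have "\<dots> = bil B (\<lambda>x y. lin B (\<lambda>z. bil B ?M (?M x y) (bvec z)) h) f g"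
    by (rule bil_cong) (rule bil_as_lin2, simp)
  also have "\<dots> = tri B (\<lambda>x y z. bil B ?M (?M x y) (bvec z)) f g h"
    by (rule tri1)
  also have "\<dots> = tri B (\<lambda>x y z. bil B ?M (bvec x) (?M y z)) f g h"
    by (rule tri_cong) (rule assoc_basis)
  also have "\<dots> = bil B (\<lambda>y z. lin B (\<lambda>x. bil B ?M (bvec x) (?M y z)) f) g h"
    by (rule tri3[symmetric])
  also have "\<dots> = bil B (\<lambda>y z. bil B ?M f (?M y z)) g h"
    by (rule bil_cong) (rule bil_as_lin1[symmetric], simp)
  also have "\<dots> = bil B (\<lambda>y z. lin B (\<lambda>v. bil B ?M f (bvec v)) (?M y z)) g h"
    by (rule bil_cong) (rule bil_as_lin2, simp)
  also have "\<dots> = lin B (\<lambda>v. bil B ?M f (bvec v)) (bil B ?M g h)"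
    by (rule lin_bil[symmetric])
  also have "\<dots> = bil B ?M f (bil B ?M g h)"
    by (rule bil_as_lin2[symmetric]) simp
  finally show ?thesis by (simp add: wH_mult_bil)
qed

lemma Mk_unit1: "y \<in> B \<Longrightarrow> Mk n q (0, 0) y = bvec y"
  by (cases y) (auto simp: Mk_eq zred_id fun_eq_iff)

lemma Mk_unit2: "y \<in> B \<Longrightarrow> Mk n q y (0, 0) = bvec y"
  by (cases y) (auto simp: Mk_eq zred_id fun_eq_iff)

lemma m_lin1: "linear_on B B (\<lambda>f. wH_mult n q f g)"
  unfolding linear_on_def wH_mult_bil
  by (intro conjI ballI allI bil_vsp Mk_vsp bil_add1 bil_scale1)

lemma m_lin2: "linear_on B B (\<lambda>g. wH_mult n q f g)"
  unfolding linear_on_def wH_mult_bil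
  by (intro conjI ballI allI bil_vsp Mk_vsp bil_add2 bil_scale2)

lemma unit1: "f \<in> vsp B \<Longrightarrow> wH_mult n q (bvec (0, 0)) f = f"
proof -
  assume f: "f \<in> vsp B"
  have "wH_mult n q (bvec (0, 0)) f = lin B (\<lambda>v. bil B (Mk n q) (bvec (0, 0)) (bvec v)) f"
    unfolding wH_mult_bil by (rule bil_as_lin2) simp
  also have "\<dots> = lin B bvec f" by (rule lin_cong) (simp add: bil_bvec Mk_unit1)
  also have "\<dots> = f" using f by (simp add: lin_id)
  finally show ?thesis .
qed

lemma unit2: "f \<in> vsp B \<Longrightarrow> wH_mult n q f (bvec (0, 0)) = f"
proof -
  assume f: "f \<in> vsp B"
  have "wH_mult n q f (bvec (0, 0)) = lin B (\<lambda>v. bil B (Mk n q) (bvec v) (bvec (0, 0))) f"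
    unfolding wH_mult_bil by (rule bil_as_lin1) simp
  also have "\<dots> = lin B bvec f" by (rule lin_cong) (simp add: bil_bvec Mk_unit2)
  also have "\<dots> = f" using f by (simp add: lin_id)
  finally show ?thesis .
qed

lemma alg: "is_algebra B (wH_mult n q) (bvec (0, 0))"
  unfolding is_algebra_def
  by (simp add: bvec_vsp m_lin1 m_lin2 unit1 unit2 assoc)

lemma D_lin: "linear_on B (B \<times> B) (lin B (DM n q a))"
  unfolding linear_on_def
  by (intro conjI ballI allI lin_vsp DM_vsp lin_add lin_scale) auto

lemma eps_lin: "linear_fun B (\<lambda>f. \<Sum>b\<in>B. f b * EM b)"
  unfolding linear_fun_def
  by (simp add: sum.distrib distrib_right sum_distrib_left mult.assoc)

lemma D_bvec: "b \<in> B \<Longrightarrow> lin B (DM n q a) (bvec b) = DM n q a b"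
  by (simp add: lin_bvec)

lemma coassoc: "(\<lambda>(x, y, z). tmap B B (lin B (DM n q a)) id (lin B (DM n q a) h) ((x, y), z))
    = tmap B B id (lin B (DM n q a)) (lin B (DM n q a) h)"
proof -
  have 1: "tmap B B (lin B (DM n q a)) id F = lin B (\<lambda>d. lin (B \<times> B) (TK (DM n q a) bvec) (DM n q a d)) h"
    if "F = lin B (DM n q a) h" for F
  proof -
    have "tmap B B (lin B (DM n q a)) id F = lin (B \<times> B) (TK (DM n q a) bvec) F"
      unfolding tmap_lin by (rule lin_cong) (auto simp: TK_def D_bvec)
    then show ?thesis using that by (simp add: lin_lin)
  qed
  have 2: "tmap B B id (lin B (DM n q a)) F = lin B (\<lambda>d. lin (B \<times> B) (TK bvec (DM n q a)) (DM n q a d)) h"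
    if "F = lin B (DM n q a) h" for F
  proof -
    have "tmap B B id (lin B (DM n q a)) F = lin (B \<times> B) (TK bvec (DM n q a)) F"
      unfolding tmap_lin by (rule lin_cong) (auto simp: TK_def D_bvec)
    then show ?thesis using that by (simp add: lin_lin)
  qed
  have 3: "lin (B \<times> B) (TK (DM n q a) bvec) (DM n q a d) ((x, y), z) =
           lin (B \<times> B) (TK bvec (DM n q a)) (DM n q a d) (x, y, z)" if "d \<in> B" for d x y z
    using coassoc_basis[OF that, where a=a] unfolding fun_eq_iff
    by (drule_tac x="(x, y, z)" in spec) simp
  show ?thesis
    unfolding 1[OF refl] 2[OF refl]
  proof (rule ext, clarify)
    fix x y z
    show "lin B (\<lambda>d. lin (B \<times> B) (TK (DM n q a) bvec) (DM n q a d)) h ((x, y), z) =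
          lin B (\<lambda>d. lin (B \<times> B) (TK bvec (DM n q a)) (DM n q a d)) h (x, y, z)"
      unfolding lin_def[of B] by (intro sum.cong refl) (simp add: 3)
  qed
qed

lemma eps_bvec: "b \<in> B \<Longrightarrow> (\<Sum>c\<in>B. bvec b c * EM c) = EM b"
  by (simp add: sum_bvec_1)

lemma counit1: "h \<in> vsp B \<Longrightarrow> (\<lambda>c. \<Sum>b\<in>B. (\<Sum>c\<in>B. bvec b c * EM c) * lin B (DM n q a) h (b, c)) = h"
proof
  fix c assume h: "h \<in> vsp B"
  have e: "(\<Sum>b\<in>B. (\<Sum>c\<in>B. bvec b c * EM c) * lin B (DM n q a) h (b, c)) = (\<Sum>b\<in>B. EM b * lin B (DM n q a) h (b, c))"
    by (rule sum.cong) (simp_all add: eps_bvec)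
  show "(\<Sum>b\<in>B. (\<Sum>c\<in>B. bvec b c * EM c) * lin B (DM n q a) h (b, c)) = h c"
  proof (cases "c \<in> B")
    case True
    have "(\<Sum>b\<in>B. EM b * lin B (DM n q a) h (b, c)) = lin (B \<times> B) (TK (\<lambda>b _. EM b) bvec) (lin B (DM n q a) h) (c, c)"
      using True by (intro bridge1) simp_all
    also have "\<dots> = lin B (\<lambda>d. lin (B \<times> B) (TK (\<lambda>b _. EM b) bvec) (DM n q a d)) h (c, c)"
      by (simp add: lin_lin)
    also have "\<dots> = lin B (\<lambda>d c. bvec d (snd c)) h (c, c)"
      by (subst lin_cong[of B _ "\<lambda>d c. bvec d (snd c)"]) (simp_all add: counit_basis1[where a=a])
    also have "\<dots> = lin B bvec h c" by (simp add: lin_def)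
    also have "\<dots> = h c" using h by (simp add: lin_id)
    finally show ?thesis using e by simp
  next
    case False
    have "lin B (DM n q a) h \<in> vsp (B \<times> B)" by (rule lin_vsp, rule DM_vsp)
    then have "lin B (DM n q a) h (b, c) = 0" for b
    proof -
      assume v: "lin B (DM n q a) h \<in> vsp (B \<times> B)"
      have "(b, c) \<notin> B \<times> B" using False by simp
      then show ?thesis using v unfolding vsp_def by blast
    qed
    moreover have "h c = 0" using h False unfolding vsp_def by blast
    ultimately show ?thesis by simp
  qed
qed

lemma counit2: "h \<in> vsp B \<Longrightarrow> (\<lambda>c. \<Sum>b\<in>B. lin B (DM n q a) h (c, b) * (\<Sum>c\<in>B. bvec b c * EM c)) = h"
proof
  fix c assume h: "h \<in> vsp B"
  have e: "(\<Sum>b\<in>B. lin B (DM n q a) h (c, b) * (\<Sum>c\<in>B. bvec b c * EM c)) = (\<Sum>b\<in>B. lin B (DM n q a) h (c, b) * EM b)"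
    by (rule sum.cong) (simp_all add: eps_bvec)
  show "(\<Sum>b\<in>B. lin B (DM n q a) h (c, b) * (\<Sum>c\<in>B. bvec b c * EM c)) = h c"
  proof (cases "c \<in> B")
    case True
    have "(\<Sum>b\<in>B. lin B (DM n q a) h (c, b) * EM b) = lin (B \<times> B) (TK bvec (\<lambda>b _. EM b)) (lin B (DM n q a) h) (c, c)"
      using True by (intro bridge2) simp_all
    also have "\<dots> = lin B (\<lambda>d. lin (B \<times> B) (TK bvec (\<lambda>b _. EM b)) (DM n q a d)) h (c, c)"
      by (simp add: lin_lin)
    also have "\<dots> = lin B (\<lambda>d c. bvec d (fst c)) h (c, c)"
      by (subst lin_cong[of B _ "\<lambda>d c. bvec d (fst c)"]) (simp_all add: counit_basis2[where a=a])
    also have "\<dots> = lin B bvec h c" by (simp add: lin_def)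
    also have "\<dots> = h c" using h by (simp add: lin_id)
    finally show ?thesis using e by simp
  next
    case False
    have "lin B (DM n q a) h \<in> vsp (B \<times> B)" by (rule lin_vsp, rule DM_vsp)
    then have "lin B (DM n q a) h (c, b) = 0" for b
    proof -
      assume v: "lin B (DM n q a) h \<in> vsp (B \<times> B)"
      have "(c, b) \<notin> B \<times> B" using False by simp
      then show ?thesis using v unfolding vsp_def by blast
    qed
    moreover have "h c = 0" using h False unfolding vsp_def by blast
    ultimately show ?thesis by simp
  qed
qed

lemma D_mult: "lin B (DM n q a) (wH_mult n q f g) = tens_mult B (wH_mult n q) (lin B (DM n q a) f) (lin B (DM n q a) g)"
proof -
  have "lin B (DM n q a) (bil B (Mk n q) f g) = bil B (\<lambda>x y. lin B (DM n q a) (Mk n q x y)) f g"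
    by (rule lin_bil)
  also have "\<dots> = bil B (\<lambda>x y. bil (B \<times> B) (MM (Mk n q)) (DM n q a x) (DM n q a y)) f g"
    by (rule bil_cong) (rule delta_mult_basis)
  also have "\<dots> = bil (B \<times> B) (MM (Mk n q)) (lin B (DM n q a) f) (lin B (DM n q a) g)"
    by (rule bil_lin[symmetric])
  finally show ?thesis by (simp add: wH_mult_bil tens_bil)
qed

lemma D_unit: "lin B (DM n q a) (bvec (0, 0)) = tprod (bvec (0, 0)) (bvec (0, 0))"
  by (simp add: lin_bvec tprod_bvec)

lemma eps_mult: "(\<Sum>b\<in>B. wH_mult n q f g b * EM b) = (\<Sum>b\<in>B. f b * EM b) * (\<Sum>b\<in>B. g b * EM b)"
proof -
  have "(\<Sum>b\<in>B. wH_mult n q f g b * EM b) = lin B (\<lambda>b (_::unit). EM b) (bil B (Mk n q) f g) ()"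
    by (simp add: lin_def wH_mult_bil)
  also have "\<dots> = bil B (\<lambda>x y. lin B (\<lambda>b (_::unit). EM b) (Mk n q x y)) f g ()"
    by (simp add: lin_bil)
  also have "\<dots> = bil B (\<lambda>x y (_::unit). EM x * EM y) f g ()"
  proof -
    have "bil B (\<lambda>x y. lin B (\<lambda>b (_::unit). EM b) (Mk n q x y)) f g = bil B (\<lambda>x y (_::unit). EM x * EM y) f g"
      by (rule bil_cong) (simp add: lin_def eps_basis)
    then show ?thesis by simp
  qed
  also have "\<dots> = (\<Sum>b\<in>B. f b * EM b) * (\<Sum>b\<in>B. g b * EM b)"
    by (simp add: bil_def sum_product mult_ac)
  finally show ?thesis .
qed

lemma eps_unit: "(\<Sum>b\<in>B. bvec (0, 0) b * EM b) = 1"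
  by (simp add: sum_bvec_1)

lemma bialg: "is_bialgebra B (wH_mult n q) (bvec (0, 0)) (lin B (DM n q a)) (\<lambda>f. \<Sum>b\<in>B. f b * EM b)"
  unfolding is_bialgebra_def
  using alg D_lin eps_lin coassoc counit1 counit2 D_mult D_unit eps_mult eps_unit
  by blast

lemma conv_eq:
  assumes KF: "\<And>b. b \<in> B \<Longrightarrow> f (bvec b) = KF b" and KG: "\<And>b. b \<in> B \<Longrightarrow> g (bvec b) = KG b"
  shows "conv B (wH_mult n q) (lin B (DM n q a)) f g = lin B (CK n q a KF KG)"
proof (rule ext)
  fix h
  have 1: "mtens B (wH_mult n q) F = lin (B \<times> B) (\<lambda>p. Mk n q (fst p) (snd p)) F" for F
    unfolding mtens_lin by (rule lin_cong) (auto simp: m_bvec)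
  have 2: "tmap B B f g F = lin (B \<times> B) (TK KF KG) F" for F
    unfolding tmap_lin by (rule lin_cong) (auto simp: TK_def KF KG)
  have "conv B (wH_mult n q) (lin B (DM n q a)) f g h =
        lin (B \<times> B) (\<lambda>p. Mk n q (fst p) (snd p)) (lin (B \<times> B) (TK KF KG) (lin B (DM n q a) h))"
    by (simp add: conv_def 1 2)
  also have "\<dots> = lin B (\<lambda>d. lin (B \<times> B) (\<lambda>bb. lin (B \<times> B) (\<lambda>p. Mk n q (fst p) (snd p)) (TK KF KG bb)) (DM n q a d)) h"
    by (simp add: lin_lin)
  also have "\<dots> = lin B (CK n q a KF KG) h"
    unfolding CK_def by (simp add: lin_TK_bil)
  finally show "conv B (wH_mult n q) (lin B (DM n q a)) f g h = lin B (CK n q a KF KG) h" .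
qed

lemma T_lin: "linear_on B B (lin B (TM n q))"
  unfolding linear_on_def
  by (intro conjI ballI allI lin_vsp TM_vsp lin_add lin_scale) auto

lemma wh1: "conv B (wH_mult n q) (lin B (DM n q a)) (conv B (wH_mult n q) (lin B (DM n q a)) (lin B (TM n q)) id) (lin B (TM n q)) h = lin B (TM n q) h"
proof -
  have c1: "conv B (wH_mult n q) (lin B (DM n q a)) (lin B (TM n q)) id = lin B (CK1 n)"
  proof -
    have "conv B (wH_mult n q) (lin B (DM n q a)) (lin B (TM n q)) id = lin B (CK n q a (TM n q) bvec)"
      by (rule conv_eq) (simp_all add: lin_bvec)
    also have "\<dots> = lin B (CK1 n)" by (rule ext, rule lin_cong) (rule ck1)
    finally show ?thesis .
  qed
  have "conv B (wH_mult n q) (lin B (DM n q a)) (lin B (CK1 n)) (lin B (TM n q)) = lin B (CK n q a (CK1 n) (TM n q))"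
    by (rule conv_eq) (simp_all add: lin_bvec)
  also have "\<dots> = lin B (TM n q)" by (rule ext, rule lin_cong) (rule wa1)
  finally show ?thesis using c1 by simp
qed

lemma wh2: "h \<in> vsp B \<Longrightarrow> conv B (wH_mult n q) (lin B (DM n q a)) (conv B (wH_mult n q) (lin B (DM n q a)) id (lin B (TM n q))) id h = h"
proof -
  assume h: "h \<in> vsp B"
  have c1: "conv B (wH_mult n q) (lin B (DM n q a)) id (lin B (TM n q)) = lin B (CK2 n)"
  proof -
    have "conv B (wH_mult n q) (lin B (DM n q a)) id (lin B (TM n q)) = lin B (CK n q a bvec (TM n q))"
      by (rule conv_eq) (simp_all add: lin_bvec)
    also have "\<dots> = lin B (CK2 n)" by (rule ext, rule lin_cong) (rule ck2)
    finally show ?thesis .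
  qed
  have "conv B (wH_mult n q) (lin B (DM n q a)) (lin B (CK2 n)) id = lin B (CK n q a (CK2 n) bvec)"
    by (rule conv_eq) (simp_all add: lin_bvec)
  also have "\<dots> = lin B bvec" by (rule ext, rule lin_cong) (rule wa2)
  finally show ?thesis using c1 h by (simp add: lin_id)
qed

lemma weak_hopf: "is_weak_hopf B (wH_mult n q) (bvec (0, 0)) (lin B (DM n q a)) (\<lambda>f. \<Sum>b\<in>B. f b * EM b) (lin B (TM n q))"
  unfolding is_weak_hopf_def
  using bialg T_lin wh1 wh2 by blast

lemma T_anti: "lin B (TM n q) (wH_mult n q f g) = wH_mult n q (lin B (TM n q) g) (lin B (TM n q) f)"
proof -
  have "lin B (TM n q) (bil B (Mk n q) f g) = bil B (\<lambda>x y. lin B (TM n q) (Mk n q x y)) f g"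
    by (rule lin_bil)
  also have "\<dots> = bil B (\<lambda>x y. bil B (Mk n q) (TM n q y) (TM n q x)) f g"
    by (rule bil_cong) (rule anti_basis)
  also have "\<dots> = bil B (\<lambda>y x. bil B (Mk n q) (TM n q y) (TM n q x)) g f"
    by (rule bil_swap[symmetric])
  also have "\<dots> = bil B (Mk n q) (lin B (TM n q) g) (lin B (TM n q) f)"
    by (rule bil_lin[symmetric])
  finally show ?thesis by (simp add: wH_mult_bil)
qed

lemma pwZ: "apow (wH_mult n q) (bvec (0, 0)) (bvec (1, 0)) k = bvec (zred n k, 0)"
proof (induction k)
  case 0 then show ?case by simp
next
  case (Suc k)
  have "apow (wH_mult n q) (bvec (0, 0)) (bvec (1, 0)) (Suc k) = Mk n q (1, 0) (zred n k, 0)"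
    using Suc n1 by (simp add: m_bvec)
  also have "\<dots> = bvec (zred n (Suc k), 0)"
    using zred_add_right[of n 1 k] by (simp add: Mk_eq fun_eq_iff)
  finally show ?case .
qed

lemma pwX: "j \<le> 1 \<Longrightarrow> apow (wH_mult n q) (bvec (0, 0)) (bvec (0, 1)) j = bvec (0, j)"
proof -
  assume "j \<le> 1"
  then consider "j = 0" | "j = 1" by linarith
  then show ?thesis
  proof cases
    case 2
    have "wH_mult n q (bvec (0, 1)) (bvec (0, 0)) = bvec (0, 1)"
      by (simp add: m_bvec Mk_eq fun_eq_iff)
    then show ?thesis using 2 by simp
  qed simp
qed

lemma basis_decomp: "h \<in> vsp B \<Longrightarrow> h = (\<lambda>c. \<Sum>(i, j)\<in>B. h (i, j) *
    wH_mult n q (apow (wH_mult n q) (bvec (0, 0)) (bvec (1, 0)) i) (apow (wH_mult n q) (bvec (0, 0)) (bvec (0, 1)) j) c)"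
proof -
  assume h: "h \<in> vsp B"
  have e: "wH_mult n q (apow (wH_mult n q) (bvec (0, 0)) (bvec (1, 0)) i) (apow (wH_mult n q) (bvec (0, 0)) (bvec (0, 1)) j) = bvec (i, j)"
    if "(i, j) \<in> B" for i j
  proof -
    have ij: "i \<le> 2 * n" "j \<le> 1" using that by auto
    then have "wH_mult n q (apow (wH_mult n q) (bvec (0, 0)) (bvec (1, 0)) i) (apow (wH_mult n q) (bvec (0, 0)) (bvec (0, 1)) j)
        = Mk n q (i, 0) (0, j)"
      unfolding pwZ pwX[OF ij(2)] using ij by (simp add: zred_id m_bvec)
    also have "\<dots> = bvec (i, j)" using ij by (simp add: Mk_eq zred_id fun_eq_iff)
    finally show ?thesis .
  qed
  have "(\<lambda>c. \<Sum>(i, j)\<in>B. h (i, j) *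
    wH_mult n q (apow (wH_mult n q) (bvec (0, 0)) (bvec (1, 0)) i) (apow (wH_mult n q) (bvec (0, 0)) (bvec (0, 1)) j) c)
    = lin B bvec h"
    unfolding lin_def
  proof (rule ext, rule sum.cong[OF refl])
    fix c x assume "x \<in> B"
    then obtain i j where x: "x = (i, j)" "(i, j) \<in> B" by (cases x) auto
    show "(case x of (i, j) \<Rightarrow> h (i, j) *
      wH_mult n q (apow (wH_mult n q) (bvec (0, 0)) (bvec (1, 0)) i) (apow (wH_mult n q) (bvec (0, 0)) (bvec (0, 1)) j) c)
      = h x * bvec x c"
      unfolding x(1) prod.case e[OF x(2)] by (rule refl)
  qed
  then show ?thesis using h by (simp add: lin_id)
qed

lemma q_qi: "q * inverse q = 1" using q_nz by simp

lemma qi_ne1: "inverse q \<noteq> 1"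
proof
  assume "inverse q = 1" then have "q = 1" by (metis inverse_1 inverse_inverse_eq)
  then show False using q_ne1 by simp
qed

lemma rel_ZX: "wH_mult n q (bvec (1, 0)) (bvec (0, 1)) = (\<lambda>c. q * wH_mult n q (bvec (0, 1)) (bvec (1, 0)) c)"
  using n1 by (simp add: m_bvec Mk_eq fun_eq_iff mult.assoc[symmetric] q_qi)

lemma rel_XX: "wH_mult n q (bvec (0, 1)) (bvec (0, 1)) = (\<lambda>c. 0)"
  using n1 by (simp add: m_bvec Mk_eq fun_eq_iff)

lemma rel_Z: "apow (wH_mult n q) (bvec (0, 0)) (bvec (1, 0)) (2 * n + 1) = bvec (1, 0)"
proof -
  have "zred n (2 * n + 1) = 1" by (simp add: zred_def)
  then show ?thesis by (simp only: pwZ)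
qed

lemma noncomm: "\<exists>f\<in>vsp B. \<exists>g\<in>vsp B. wH_mult n q f g \<noteq> wH_mult n q g f"
proof (intro bexI)
  have "wH_mult n q (bvec (1, 0)) (bvec (0, 1)) = Mk n q (1, 0) (0, 1)" by (rule m_bvec) (use n1 in simp_all)
  then have "wH_mult n q (bvec (1, 0)) (bvec (0, 1)) (1, 1) = 1" unfolding Mk_eq using n1 by (simp add: bvec_def zred_id)
  moreover have "wH_mult n q (bvec (0, 1)) (bvec (1, 0)) = Mk n q (0, 1) (1, 0)" by (rule m_bvec) (use n1 in simp_all)
  then have "wH_mult n q (bvec (0, 1)) (bvec (1, 0)) (1, 1) = inverse q" unfolding Mk_eq using n1 by (simp add: bvec_def zred_id)
  ultimately show "wH_mult n q (bvec (1, 0)) (bvec (0, 1)) \<noteq> wH_mult n q (bvec (0, 1)) (bvec (1, 0))"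
    using qi_ne1 by auto
qed (use n1 in \<open>auto intro: bvec_vsp\<close>)

lemma DZ: "lin B (DM n q a) (bvec (1, 0)) = (\<lambda>p. tprod (bvec (1, 0)) (bvec (1, 0)) p
     + a * (1 - inverse (q ^ 2)) * tprod (wH_mult n q (apow (wH_mult n q) (bvec (0, 0)) (bvec (1, 0)) (n + 1)) (bvec (0, 1))) (wH_mult n q (bvec (1, 0)) (bvec (0, 1))) p)"
proof -
  have 1: "wH_mult n q (apow (wH_mult n q) (bvec (0, 0)) (bvec (1, 0)) (n + 1)) (bvec (0, 1)) = bvec (zred n (n + 1), 1)"
    unfolding pwZ using n1 by (simp add: m_bvec Mk_eq fun_eq_iff)
  have 2: "wH_mult n q (bvec (1, 0)) (bvec (0, 1)) = bvec (1, 1)"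
    using n1 by (simp add: m_bvec Mk_eq fun_eq_iff zred_id)
  have 3: "lin B (DM n q a) (bvec (1, 0)) = DM n q a (1, 0)" using n1 by (simp add: lin_bvec)
  show ?thesis unfolding 1 2 3 tprod_bvec
    by (simp add: DM_def dd_def power_inverse)
qed

lemma DX: "lin B (DM n q a) (bvec (0, 1)) = (\<lambda>p. tprod (bvec (0, 1)) (bvec (0, 0)) p
     + tprod (apow (wH_mult n q) (bvec (0, 0)) (bvec (1, 0)) n) (bvec (0, 1)) p)"
proof -
  have 3: "lin B (DM n q a) (bvec (0, 1)) = DM n q a (0, 1)" using n1 by (simp add: lin_bvec)
  show ?thesis unfolding 3 pwZ tprod_bvec
    by (simp add: DM_def)
qed

lemma eZ: "(\<Sum>b\<in>B. bvec (1, 0) b * EM b) = 1" using n1 by (simp add: sum_bvec_1)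
lemma eX: "(\<Sum>b\<in>B. bvec (0, 1) b * EM b) = 0" using n1 by (simp add: sum_bvec_1 EM_def)

lemma TZ: "lin B (TM n q) (bvec (1, 0)) = apow (wH_mult n q) (bvec (0, 0)) (bvec (1, 0)) (2 * n - 1)"
  unfolding pwZ using n1 by (simp add: lin_bvec tz_def)

lemma TX: "lin B (TM n q) (bvec (0, 1)) = (\<lambda>c. - wH_mult n q (apow (wH_mult n q) (bvec (0, 0)) (bvec (1, 0)) n) (bvec (0, 1)) c)"
  unfolding pwZ using n1 by (simp add: lin_bvec m_bvec Mk_eq fun_eq_iff)

lemma Tu: "lin B (TM n q) (bvec (0, 0)) = bvec (0, 0)"
  by (simp add: lin_bvec)

lemma noncocomm: "\<exists>h\<in>vsp B. (\<lambda>(x, y). lin B (DM n q a) h (y, x)) \<noteq> lin B (DM n q a) h"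
proof (intro bexI)
  have 3: "lin B (DM n q a) (bvec (0, 1)) = DM n q a (0, 1)" using n1 by (simp add: lin_bvec)
  have zn: "zred n n = n" by (simp add: zred_id)
  have "(\<lambda>(x, y). lin B (DM n q a) (bvec (0, 1)) (y, x)) ((0, 1), (0, 0)) = 0"
    unfolding 3 using n1 by (simp add: DM_def bvec_def zn)
  moreover have "lin B (DM n q a) (bvec (0, 1)) ((0, 1), (0, 0)) = 1"
    unfolding 3 using n1 by (simp add: DM_def bvec_def zn)
  ultimately show "(\<lambda>(x, y). lin B (DM n q a) (bvec (0, 1)) (y, x)) \<noteq> lin B (DM n q a) (bvec (0, 1))"
    by (metis zero_neq_one)
qed (use n1 in \<open>auto intro: bvec_vsp\<close>)

end

theorem theorem3p1:
  fixes n :: nat and q a :: "'k::field_char_0"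
  assumes alg_closed: "\<forall>p :: 'k poly. degree p > 0 \<longrightarrow> (\<exists>x. poly p x = 0)"
    and n_pos: "n \<ge> 1"
    and q_root: "q ^ (2 * n) = 1"
    and q_prim: "\<forall>j. 0 < j \<and> j < 2 * n \<longrightarrow> q ^ j \<noteq> 1"
    and a_nz: "a \<noteq> 0"
  shows
    "let B = wH_basis n; m = wH_mult n q; u = bvec (0, 0);
         Z = bvec (1, 0); X = bvec (0, 1); pw = apow m u
     in is_algebra B m u \<and> Z \<in> vsp B \<and> X \<in> vsp B
      \<comment> \<open>defining relations, and Z^i X^j (i <= 2n, j <= 1) is a basis\<close>
      \<and> pw Z (2 * n + 1) = Z \<and> m Z X = (\<lambda>c. q * m X Z c) \<and> m X X = (\<lambda>c. 0)
      \<and> (\<forall>h\<in>vsp B. h = (\<lambda>c. \<Sum>(i, j)\<in>B. h (i, j) * m (pw Z i) (pw X j) c))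
      \<comment> \<open>noncommutative\<close>
      \<and> (\<exists>f\<in>vsp B. \<exists>g\<in>vsp B. m f g \<noteq> m g f)
      \<and> (\<exists>\<Delta> \<epsilon> T. is_weak_hopf B m u \<Delta> \<epsilon> T
          \<and> \<Delta> Z = (\<lambda>p. tprod Z Z p
                 + a * (1 - inverse (q ^ 2)) * tprod (m (pw Z (n + 1)) X) (m Z X) p)
          \<and> \<Delta> X = (\<lambda>p. tprod X u p + tprod (pw Z n) X p)
          \<and> \<epsilon> Z = 1 \<and> \<epsilon> X = 0
          \<and> T Z = pw Z (2 * n - 1) \<and> T X = (\<lambda>c. - m (pw Z n) X c)
          \<and> (\<forall>f\<in>vsp B. \<forall>g\<in>vsp B. T (m f g) = m (T g) (T f)) \<and> T u = u
          \<comment> \<open>noncocommutative\<close>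
          \<and> (\<exists>h\<in>vsp B. (\<lambda>(x, y). \<Delta> h (y, x)) \<noteq> \<Delta> h))"
proof -
  interpret wh n q by unfold_locales (use n_pos q_root q_prim in auto)
  have Zv: "(bvec (1, 0) :: _ \<Rightarrow> 'k) \<in> vsp (wH_basis n)" using n_pos by (intro bvec_vsp) simp
  have Xv: "(bvec (0, 1) :: _ \<Rightarrow> 'k) \<in> vsp (wH_basis n)" by (intro bvec_vsp) simp
  show ?thesis unfolding Let_def
  proof (intro conjI)
    show "\<exists>\<Delta> \<epsilon> T. is_weak_hopf (wH_basis n) (wH_mult n q) (bvec (0, 0)) \<Delta> \<epsilon> T
          \<and> \<Delta> (bvec (1, 0)) = (\<lambda>p. tprod (bvec (1, 0)) (bvec (1, 0)) p
                 + a * (1 - inverse (q ^ 2)) * tprod (wH_mult n q (apow (wH_mult n q) (bvec (0, 0)) (bvec (1, 0)) (n + 1)) (bvec (0, 1))) (wH_mult n q (bvec (1, 0)) (bvec (0, 1))) p)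
          \<and> \<Delta> (bvec (0, 1)) = (\<lambda>p. tprod (bvec (0, 1)) (bvec (0, 0)) p + tprod (apow (wH_mult n q) (bvec (0, 0)) (bvec (1, 0)) n) (bvec (0, 1)) p)
          \<and> \<epsilon> (bvec (1, 0)) = 1 \<and> \<epsilon> (bvec (0, 1)) = 0
          \<and> T (bvec (1, 0)) = apow (wH_mult n q) (bvec (0, 0)) (bvec (1, 0)) (2 * n - 1)
          \<and> T (bvec (0, 1)) = (\<lambda>c. - wH_mult n q (apow (wH_mult n q) (bvec (0, 0)) (bvec (1, 0)) n) (bvec (0, 1)) c)
          \<and> (\<forall>f\<in>vsp (wH_basis n). \<forall>g\<in>vsp (wH_basis n). T (wH_mult n q f g) = wH_mult n q (T g) (T f)) \<and> T (bvec (0, 0)) = bvec (0, 0)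
          \<and> (\<exists>h\<in>vsp (wH_basis n). (\<lambda>(x, y). \<Delta> h (y, x)) \<noteq> \<Delta> h)"
      by (intro exI[of _ "lin (wH_basis n) (DM n q a)"] exI[of _ "\<lambda>f. \<Sum>b\<in>wH_basis n. f b * EM b"]
          exI[of _ "lin (wH_basis n) (TM n q)"] conjI weak_hopf DZ DX eZ eX TZ TX ballI T_anti Tu noncocomm)
  qed (rule alg Zv Xv rel_Z rel_ZX rel_XX noncomm | (intro ballI, erule basis_decomp))+
qed


end
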